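(* Let $n\geq 1$ and $0\leq p\leq 1$. Let $\Pr_p(C)$ denote the probability, under the bias-$p$ measure, that a Boolean function on $n$ variables is canalizing. Then $$\Pr_p(C) = (-1)^n\bigl(p^{2^n}+(1-p)^{2^n}\bigr) - 2n\,p^{2^{n-1}}(1-p)^{2^{n-1}} + \sum_{k=1}^n (-1)^{k+1}\binom{n}{k}2^k\bigl(p^{2^n-2^{n-k}}+(1-p)^{2^n-2^{n-k}}\bigr).$$
   Context: A Boolean function on $n$ variables is a function $f:\{0,1\}^n\to\{0,1\}$; write $[n]=\{0,1,\dots,n-1\}$ for the index set of the variables. For $0\leq p\leq 1$, the bias-$p$ probability measure on the (finite) set of all Boolean functions on $n$ variables is $\Pr_p(f)=p^{|f^{-1}\{1\}|}(1-p)^{|f^{-1}\{0\}|}$ (with $0^0=1$). A Boolean function $f$ is canalizing if there exist $i\in[n]$ and $s,v\in\{0,1\}$ such that for all $x\in\{0,1\}^n$, $x_i=s$ implies $f(x)=v$. $C$ denotes the set of canalizing Boolean functions on $n$ variables. *)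

theory Defs
  imports Complex_Main
begin

(* Inputs x in {0,1}^n are represented as bool lists of length n (True = 1, False = 0).
   A Boolean function on n variables is represented as a function bool list => bool
   that is False outside {0,1}^n (so that the set of Boolean functions is finite and
   in bijection with the maps {0,1}^n -> {0,1}). *)

definition cube :: "nat \<Rightarrow> bool list set" where
  "cube n = {x. length x = n}"

definition boolfuns :: "nat \<Rightarrow> (bool list \<Rightarrow> bool) set" where
  "boolfuns n = {f. \<forall>x. x \<notin> cube n \<longrightarrow> f x = False}"

definition canalizing :: "nat \<Rightarrow> (bool list \<Rightarrow> bool) \<Rightarrow> bool" where
  "canalizing n f \<longleftrightarrow>
     (\<exists>i<n. \<exists>s v. \<forall>x\<in>cube n. x ! i = s \<longrightarrow> f x = v)"

definition canal_set :: "nat \<Rightarrow> (bool list \<Rightarrow> bool) set" where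
  "canal_set n = {f \<in> boolfuns n. canalizing n f}"

(* bias-p weight: p^|f^{-1}{1}| (1-p)^|f^{-1}{0}|, with 0^0 = 1 (as for Isabelle's ^) *)
definition prob_p :: "nat \<Rightarrow> real \<Rightarrow> (bool list \<Rightarrow> bool) \<Rightarrow> real" where
  "prob_p n p f = p ^ card {x\<in>cube n. f x} * (1 - p) ^ card {x\<in>cube n. \<not> f x}"

definition Pr_p :: "nat \<Rightarrow> real \<Rightarrow> (bool list \<Rightarrow> bool) set \<Rightarrow> real" where
  "Pr_p n p A = (\<Sum>f\<in>A. prob_p n p f)"

end

theory Submission
  imports Defs "HOL-Library.FuncSet"
begin


lemma cube_finite: "finite (cube n)"
proof -
  have "cube n = {xs. set xs \<subseteq> (UNIV::bool set) \<and> length xs = n}" by (auto simp: cube_def)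
  thus ?thesis using finite_lists_length_eq[of "UNIV::bool set" n] by simp
qed

lemma cube_card: "card (cube n) = 2 ^ n"
proof -
  have "cube n = {xs. set xs \<subseteq> (UNIV::bool set) \<and> length xs = n}" by (auto simp: cube_def)
  thus ?thesis using card_lists_length_eq[of "UNIV::bool set" n] by simp
qed

lemma half_split:
  assumes "j < n" and that: "\<And>x c. P (x[j := c]) = P x"
  shows "card {x\<in>cube n. P x \<and> x ! j = b} = card {x\<in>cube n. P x \<and> x ! j = (\<not> b)}"
proof -
  let ?f = "\<lambda>x. x[j := \<not> x ! j]"
  have "bij_betw ?f {x\<in>cube n. P x \<and> x ! j = b} {x\<in>cube n. P x \<and> x ! j = (\<not> b)}"
  proof (rule bij_betw_byWitness[where f'="?f"])
    show "\<forall>a\<in>{x \<in> cube n. P x \<and> x ! j = b}. ?f (?f a) = a"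
      using assms by (clarsimp simp: cube_def)
    show "\<forall>a\<in>{x \<in> cube n. P x \<and> x ! j = (\<not> b)}. ?f (?f a) = a"
      using assms by (clarsimp simp: cube_def list_update_same_conv)
    show "?f ` {x \<in> cube n. P x \<and> x ! j = b} \<subseteq> {x \<in> cube n. P x \<and> x ! j = (\<not> b)}"
      using assms that by (force simp: cube_def)
    show "?f ` {x \<in> cube n. P x \<and> x ! j = (\<not> b)} \<subseteq> {x \<in> cube n. P x \<and> x ! j = b}"
      using assms that by (force simp: cube_def)
  qed
  thus ?thesis by (rule bij_betw_same_card)
qed

lemma subcube_card:
  assumes "finite I" "I \<subseteq> {..<n}"
  shows "card {x\<in>cube n. \<forall>i\<in>I. x ! i = g i} = 2 ^ (n - card I)"
  using assms
proof (induction I rule: finite_induct)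
  case empty
  then show ?case by (simp add: cube_card)
next
  case (insert j I)
  let ?P = "\<lambda>x. \<forall>i\<in>I. x ! i = g i"
  have jn: "j < n" using insert by auto
  have P: "?P (x[j := c]) = ?P x" for x c using insert(2) by (metis nth_list_update_neq)
  have split: "{x\<in>cube n. ?P x} = {x\<in>cube n. ?P x \<and> x ! j = g j} \<union> {x\<in>cube n. ?P x \<and> x ! j = (\<not> g j)}"
    by auto
  have c1: "card {x\<in>cube n. ?P x} = card {x\<in>cube n. ?P x \<and> x ! j = g j} + card {x\<in>cube n. ?P x \<and> x ! j = (\<not> g j)}"
    by (subst split, rule card_Un_disjoint) (auto intro: finite_subset[OF _ cube_finite])
  have c2: "card {x\<in>cube n. ?P x \<and> x ! j = g j} = card {x\<in>cube n. ?P x \<and> x ! j = (\<not> g j)}"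
    using half_split[OF jn P] by blast
  have e: "{x\<in>cube n. \<forall>i\<in>insert j I. x ! i = g i} = {x\<in>cube n. ?P x \<and> x ! j = g j}" by auto
  have "card I < n" using insert
  proof -
    have "I \<subset> {..<n}" using insert by auto
    hence "card I < card {..<n}" by (rule psubset_card_mono[rotated]) simp
    thus ?thesis by simp
  qed
  hence "2 ^ (n - card I) = 2 * (2::nat) ^ (n - card (insert j I))"
    using insert by (simp add: Suc_diff_Suc flip: power_Suc)
  then show ?case using insert c1 c2 e by simp
qed



lemma wt_sum:
  fixes p :: real
  assumes "finite Cu"
  shows "(\<Sum>S\<in>Pow Cu. p ^ card S * (1 - p) ^ card (Cu - S)) = 1"
proof -
  have "(\<Prod>x\<in>Cu. p + (1 - p)) = (\<Sum>S\<in>Pow Cu. (\<Prod>x\<in>S. p) * (\<Prod>x\<in>Cu - S. 1 - p))"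
    by (rule prod_add[OF assms])
  thus ?thesis by simp
qed

lemma wt_sub:
  fixes p :: real
  assumes "finite Cu" "U \<subseteq> Cu"
  shows "(\<Sum>S\<in>Pow Cu. p ^ card S * (1 - p) ^ card (Cu - S) * of_bool (U \<subseteq> S)) = p ^ card U"
proof -
  let ?g = "\<lambda>x. if x \<in> U then 0 else 1 - p"
  have "(\<Prod>x\<in>Cu. p + ?g x) = (\<Sum>S\<in>Pow Cu. (\<Prod>x\<in>S. p) * (\<Prod>x\<in>Cu - S. ?g x))"
    by (rule prod_add[OF assms(1)])
  moreover have "(\<Prod>x\<in>Cu. p + ?g x) = p ^ card U"
  proof -
    have "(\<Prod>x\<in>Cu. p + ?g x) = (\<Prod>x\<in>Cu. if x \<in> U then p else 1)"
      by (rule prod.cong) auto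
    also have "\<dots> = (\<Prod>x\<in>Cu \<inter> U. p)"
      by (subst prod.If_cases[OF assms(1)]) simp
    also have "\<dots> = p ^ card U" using assms by (simp add: Int_absorb1)
    finally show ?thesis .
  qed
  moreover have "(\<Prod>x\<in>Cu - S. ?g x) = (1 - p) ^ card (Cu - S) * of_bool (U \<subseteq> S)"
    if "S \<in> Pow Cu" for S
  proof (cases "U \<subseteq> S")
    case True
    then have "(\<Prod>x\<in>Cu - S. ?g x) = (\<Prod>x\<in>Cu - S. 1 - p)" by (intro prod.cong) auto
    then show ?thesis using True by simp
  next
    case False
    then obtain u where "u \<in> U" "u \<notin> S" by auto
    then have "u \<in> Cu - S" using assms by auto
    then have "(\<Prod>x\<in>Cu - S. ?g x) = 0"
      using assms \<open>u \<in> U\<close> by (intro prod_zero) auto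
    then show ?thesis using False by simp
  qed
  ultimately show ?thesis by (simp add: mult.assoc)
qed

lemma prod_expand:
  fixes g :: "'a \<Rightarrow> real"
  assumes "finite A"
  shows "(\<Prod>a\<in>A. 1 - g a) = (\<Sum>T\<in>Pow A. (-1) ^ card T * prod g T)"
proof -
  have "(\<Prod>a\<in>A. - g a + 1) = (\<Sum>T\<in>Pow A. (\<Prod>a\<in>T. - g a) * (\<Prod>a\<in>A - T. 1))"
    by (rule prod_add[OF assms])
  also have "\<dots> = (\<Sum>T\<in>Pow A. (-1) ^ card T * prod g T)"
  proof (rule sum.cong)
    fix T assume "T \<in> Pow A"
    then have "finite T" using assms finite_subset by auto
    have "(\<Prod>a\<in>T. - g a) = (\<Prod>a\<in>T. (-1) * g a)" by simp
    also have "\<dots> = (\<Prod>a\<in>T. (-1::real)) * prod g T" by (rule prod.distrib)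
    also have "\<dots> = (-1) ^ card T * prod g T" by simp
    finally show "(\<Prod>a\<in>T. - g a) * (\<Prod>a\<in>A - T. 1) = (-1) ^ card T * prod g T" by simp
  qed simp
  finally show ?thesis by simp
qed

lemma prod_of_bool:
  assumes "finite T"
  shows "(\<Prod>a\<in>T. of_bool (P a) :: real) = of_bool (\<forall>a\<in>T. P a)"
proof (cases "\<forall>a\<in>T. P a")
  case True then show ?thesis by simp
next
  case False
  then obtain a where "a \<in> T" "\<not> P a" by auto
  then show ?thesis using False assms by (simp add: prod_zero_iff)
qed

lemma incl_excl:
  fixes p :: real and H :: "'a \<Rightarrow> 'b set"
  assumes "finite Cu" "finite A" "\<forall>a\<in>A. H a \<subseteq> Cu"
  shows "(\<Sum>S\<in>Pow Cu. p ^ card S * (1 - p) ^ card (Cu - S) * of_bool (\<exists>a\<in>A. H a \<subseteq> S))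
       = 1 - (\<Sum>T\<in>Pow A. (-1) ^ card T * p ^ card (\<Union>(H ` T)))"
proof -
  let ?w = "\<lambda>S. p ^ card S * (1 - p) ^ card (Cu - S)"
  have ind: "(of_bool (\<exists>a\<in>A. H a \<subseteq> S) :: real) = 1 - (\<Sum>T\<in>Pow A. (-1) ^ card T * of_bool (\<Union>(H ` T) \<subseteq> S))"
    for S
  proof -
    have "of_bool (\<exists>a\<in>A. H a \<subseteq> S) = 1 - (\<Prod>a\<in>A. 1 - of_bool (H a \<subseteq> S) :: real)"
    proof (cases "\<exists>a\<in>A. H a \<subseteq> S")
      case True
      then obtain a where "a \<in> A" "H a \<subseteq> S" by auto
      then have "(\<Prod>a\<in>A. 1 - of_bool (H a \<subseteq> S) :: real) = 0"
        using assms(2) by (intro prod_zero) auto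
      then show ?thesis using True by simp
    next
      case False then show ?thesis by simp
    qed
    also have "\<dots> = 1 - (\<Sum>T\<in>Pow A. (-1) ^ card T * (\<Prod>a\<in>T. of_bool (H a \<subseteq> S)))"
      by (simp add: prod_expand[OF assms(2)])
    also have "\<dots> = 1 - (\<Sum>T\<in>Pow A. (-1) ^ card T * of_bool (\<Union>(H ` T) \<subseteq> S))"
    proof -
      have "(\<Prod>a\<in>T. of_bool (H a \<subseteq> S)) = (of_bool (\<Union>(H ` T) \<subseteq> S) :: real)" if "T \<in> Pow A" for T
      proof -
        have "finite T" using that assms(2) finite_subset by auto
        then show ?thesis by (simp add: prod_of_bool) blast
      qed
      then show ?thesis by (intro arg_cong2[where f="(-)"] refl sum.cong) auto
    qed
    finally show ?thesis .
  qed
  have "(\<Sum>S\<in>Pow Cu. ?w S * of_bool (\<exists>a\<in>A. H a \<subseteq> S))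
      = (\<Sum>S\<in>Pow Cu. ?w S - (\<Sum>T\<in>Pow A. (-1) ^ card T * (?w S * of_bool (\<Union>(H ` T) \<subseteq> S))))"
    by (intro sum.cong refl) (simp add: ind right_diff_distrib sum_distrib_left mult_ac del: sum_mult_of_bool_eq)
  also have "\<dots> = 1 - (\<Sum>T\<in>Pow A. (-1) ^ card T * (\<Sum>S\<in>Pow Cu. ?w S * of_bool (\<Union>(H ` T) \<subseteq> S)))"
    by (simp add: sum_subtractf wt_sum[OF assms(1)] sum_distrib_left del: sum_mult_of_bool_eq)
       (rule sum.swap)
  also have "\<dots> = 1 - (\<Sum>T\<in>Pow A. (-1) ^ card T * p ^ card (\<Union>(H ` T)))"
  proof -
    have "(\<Sum>S\<in>Pow Cu. ?w S * of_bool (\<Union>(H ` T) \<subseteq> S)) = p ^ card (\<Union>(H ` T))" if "T \<in> Pow A" for T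
      using that assms by (intro wt_sub) auto
    then show ?thesis by (intro arg_cong2[where f="(-)"] refl sum.cong) auto
  qed
  finally show ?thesis .
qed



definition hs :: "nat \<Rightarrow> nat \<times> bool \<Rightarrow> bool list set" where
  "hs n a = {x\<in>cube n. x ! fst a = snd a}"

definition Phi :: "nat set \<times> (nat \<Rightarrow> bool) \<Rightarrow> (nat \<times> bool) set" where
  "Phi Ig = (\<lambda>i. (i, snd Ig i)) ` fst Ig"

lemma sum_pow_card:
  fixes \<phi> :: "nat \<Rightarrow> real"
  assumes "finite X"
  shows "(\<Sum>I\<in>Pow X. \<phi> (card I)) = (\<Sum>k\<le>card X. real (card X choose k) * \<phi> k)"
proof -
  have "(\<Sum>I\<in>Pow X. \<phi> (card I)) = (\<Sum>k\<in>{..card X}. \<Sum>I\<in>{I. I \<in> Pow X \<and> card I = k}. \<phi> (card I))"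
    by (rule sum.group[symmetric]) (use assms in \<open>auto simp: card_mono\<close>)
  also have "\<dots> = (\<Sum>k\<le>card X. real (card X choose k) * \<phi> k)"
  proof (rule sum.cong[OF refl])
    fix k
    have "(\<Sum>I\<in>{I. I \<in> Pow X \<and> card I = k}. \<phi> (card I)) = (\<Sum>I\<in>{I. I \<subseteq> X \<and> card I = k}. \<phi> k)"
      by (rule sum.cong) auto
    also have "\<dots> = real (card X choose k) * \<phi> k" using n_subsets[OF assms, of k] by simp
    finally show "(\<Sum>I\<in>{I. I \<in> Pow X \<and> card I = k}. \<phi> (card I)) = real (card X choose k) * \<phi> k" .
  qed
  finally show ?thesis .
qed

lemma alt_pow_zero:
  assumes "finite A" "A \<noteq> {}"
  shows "(\<Sum>T\<in>Pow A. (-1::real) ^ card T) = 0"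
proof -
  have "(\<Prod>a\<in>A. (-1::real) + 1) = (\<Sum>T\<in>Pow A. (\<Prod>a\<in>T. -1) * (\<Prod>a\<in>A - T. 1))"
    by (rule prod_add[OF assms(1)])
  moreover have "card A > 0" using assms by (simp add: card_gt_0_iff)
  ultimately show ?thesis by (simp add: power_0_left)
qed

lemma Phi_sub:
  assumes "Ig \<in> Sigma (Pow {..<n}) (\<lambda>I. PiE I (\<lambda>_. UNIV))"
  shows "Phi Ig \<in> Pow ({..<n} \<times> UNIV)"
  using assms by (auto simp: Phi_def)

lemma Phi_inj: "inj_on Phi (Sigma (Pow {..<n}) (\<lambda>I. PiE I (\<lambda>_. UNIV)))"
proof (rule inj_onI)
  fix a b assume a: "a \<in> Sigma (Pow {..<n}) (\<lambda>I. PiE I (\<lambda>_. UNIV))"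
    and b: "b \<in> Sigma (Pow {..<n}) (\<lambda>I. PiE I (\<lambda>_. UNIV))" and e: "Phi a = Phi b"
  obtain I g where ab: "a = (I, g)" by (cases a)
  obtain J h where bb: "b = (J, h)" by (cases b)
  have "fst ` Phi a = I" "fst ` Phi b = J" using ab bb by (auto simp: Phi_def image_image)
  hence IJ: "I = J" using e by simp
  have "g i = h i" if "i \<in> I" for i
  proof -
    have "(i, g i) \<in> Phi b" using e ab that by (auto simp: Phi_def)
    thus ?thesis using bb by (auto simp: Phi_def)
  qed
  moreover have "g i = h i" if "i \<notin> I" for i
    using a b ab bb IJ that by (auto simp: PiE_def extensional_def)
  ultimately have "g = h" by blast
  thus "a = b" using ab bb IJ by simp
qed

lemma incons_union:
  assumes "T \<in> Pow ({..<n} \<times> UNIV) - Phi ` Sigma (Pow {..<n}) (\<lambda>I. PiE I (\<lambda>_. UNIV))"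
  shows "\<Union>(hs n ` T) = cube n"
proof (rule ccontr)
  assume "\<Union>(hs n ` T) \<noteq> cube n"
  moreover have "\<Union>(hs n ` T) \<subseteq> cube n" by (auto simp: hs_def)
  ultimately obtain x where x: "x \<in> cube n" "x \<notin> \<Union>(hs n ` T)" by blast
  have s: "s = (\<not> x ! i)" if "(i, s) \<in> T" for i s
    using x that by (auto simp: hs_def)
  let ?I = "fst ` T"
  let ?g = "restrict (\<lambda>i. \<not> x ! i) ?I"
  have "(?I, ?g) \<in> Sigma (Pow {..<n}) (\<lambda>I. PiE I (\<lambda>_. UNIV))" using assms by auto
  moreover have "Phi (?I, ?g) = T"
  proof
    show "Phi (?I, ?g) \<subseteq> T"
    proof
      fix y assume "y \<in> Phi (?I, ?g)"
      then obtain i s where "(i, s) \<in> T" "y = (i, \<not> x ! i)" by (auto simp: Phi_def)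
      thus "y \<in> T" using s by auto
    qed
    show "T \<subseteq> Phi (?I, ?g)"
    proof
      fix y assume "y \<in> T"
      then obtain i s where y: "y = (i, s)" "(i, s) \<in> T" by (cases y) auto
      hence "s = (\<not> x ! i)" using s by auto
      thus "y \<in> Phi (?I, ?g)" using y by (force simp: Phi_def)
    qed
  qed
  ultimately show False using assms by blast
qed

lemma cons_union:
  assumes "(I, g) \<in> Sigma (Pow {..<n}) (\<lambda>I. PiE I (\<lambda>_. UNIV))"
  shows "card (\<Union>(hs n ` Phi (I, g))) = 2 ^ n - 2 ^ (n - card I)"
    and "card (Phi (I, g)) = card I"
proof -
  have fI: "finite I" using assms finite_subset by auto
  have "\<Union>(hs n ` Phi (I, g)) = cube n - {x\<in>cube n. \<forall>i\<in>I. x ! i = (\<not> g i)}"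
    by (auto simp: hs_def Phi_def)
  moreover have "card {x\<in>cube n. \<forall>i\<in>I. x ! i = (\<not> g i)} = 2 ^ (n - card I)"
    using subcube_card[OF fI, of n "\<lambda>i. \<not> g i"] assms by auto
  ultimately show "card (\<Union>(hs n ` Phi (I, g))) = 2 ^ n - 2 ^ (n - card I)"
    by (simp add: card_Diff_subset cube_finite cube_card)
  show "card (Phi (I, g)) = card I"
    unfolding Phi_def by (simp add: card_image inj_on_def)
qed

lemma comb_sum:
  fixes r :: real
  assumes "n \<ge> 1"
  shows "(\<Sum>T\<in>Pow ({..<n} \<times> UNIV). (-1) ^ card T * r ^ card (\<Union>(hs n ` T)))
     = (\<Sum>k\<le>n. real (n choose k) * (-2) ^ k * (r ^ (2 ^ n - 2 ^ (n - k)) - r ^ (2 ^ n)))"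
proof -
  let ?A = "Pow ({..<n} \<times> (UNIV::bool set))"
  let ?Sg = "Sigma (Pow {..<n}) (\<lambda>I. PiE I (\<lambda>_. (UNIV::bool set)))"
  let ?C = "Phi ` ?Sg"
  let ?F = "\<lambda>T. (-1::real) ^ card T * r ^ card (\<Union>(hs n ` T))"
  have fA: "finite ?A" by simp
  have CA: "?C \<subseteq> ?A" using Phi_sub by blast
  have fC: "finite ?C" using finite_subset[OF CA fA] .
  have s1: "sum ?F ?A = sum ?F (?A - ?C) + sum ?F ?C"
    by (rule sum.subset_diff[OF CA fA])
  have s2: "sum ?F (?A - ?C) = r ^ (2 ^ n) * (\<Sum>T\<in>?A - ?C. (-1) ^ card T)"
  proof -
    have "sum ?F (?A - ?C) = (\<Sum>T\<in>?A - ?C. (-1) ^ card T * r ^ (2 ^ n))"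
      by (intro sum.cong refl) (simp add: incons_union cube_card)
    thus ?thesis by (simp add: sum_distrib_left mult.commute)
  qed
  have s3: "(\<Sum>T\<in>?A - ?C. (-1::real) ^ card T) = - (\<Sum>T\<in>?C. (-1) ^ card T)"
  proof -
    have "(\<Sum>T\<in>?A. (-1::real) ^ card T) = 0"
    proof (rule alt_pow_zero)
      have "(0, True) \<in> {..<n} \<times> (UNIV::bool set)" using assms by simp
      thus "{..<n} \<times> (UNIV::bool set) \<noteq> {}" by blast
    qed simp
    moreover have "(\<Sum>T\<in>?A. (-1::real) ^ card T) = (\<Sum>T\<in>?A - ?C. (-1) ^ card T) + (\<Sum>T\<in>?C. (-1) ^ card T)"
      by (rule sum.subset_diff[OF CA fA])
    ultimately show ?thesis by linarith
  qed
  have "sum ?F ?A = r ^ 2 ^ n * - (\<Sum>T\<in>?C. (- 1) ^ card T) + sum ?F ?C"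
    by (simp only: s1 s2 s3)
  also have "\<dots> = (\<Sum>T\<in>?C. (-1) ^ card T * (r ^ card (\<Union>(hs n ` T)) - r ^ (2 ^ n)))"
    by (simp add: sum_distrib_left sum_subtractf right_diff_distrib mult.commute)
  also have "\<dots> = (\<Sum>Ig\<in>?Sg. (-1) ^ card (fst Ig) * (r ^ (2 ^ n - 2 ^ (n - card (fst Ig))) - r ^ (2 ^ n)))"
    by (subst sum.reindex[OF Phi_inj]) (auto intro!: sum.cong simp: cons_union)
  also have "\<dots> = (\<Sum>I\<in>Pow {..<n}. \<Sum>g\<in>PiE I (\<lambda>_. (UNIV::bool set)). (-1) ^ card I * (r ^ (2 ^ n - 2 ^ (n - card I)) - r ^ (2 ^ n)))"
  proof -
    have fin: "\<forall>I\<in>Pow {..<n}. finite (PiE I (\<lambda>_. (UNIV::bool set)))"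
      by (auto intro!: finite_PiE intro: finite_subset)
    show ?thesis by (subst sum.Sigma[OF _ fin]) (simp_all add: split_def)
  qed
  also have "\<dots> = (\<Sum>I\<in>Pow {..<n}. (-2) ^ card I * (r ^ (2 ^ n - 2 ^ (n - card I)) - r ^ (2 ^ n)))"
  proof (rule sum.cong[OF refl])
    fix I assume "I \<in> Pow {..<n}"
    hence "finite I" using finite_subset by auto
    hence "card (PiE I (\<lambda>_. (UNIV::bool set))) = 2 ^ card I" by (simp add: card_PiE)
    thus "(\<Sum>g\<in>PiE I (\<lambda>_. (UNIV::bool set)). (-1) ^ card I * (r ^ (2 ^ n - 2 ^ (n - card I)) - r ^ (2 ^ n)))
        = (-2) ^ card I * (r ^ (2 ^ n - 2 ^ (n - card I)) - r ^ (2 ^ n))"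
    proof -
      have m2: "(-2::real) ^ card I = (-1) ^ card I * 2 ^ card I"
        using power_mult_distrib[of "-1::real" 2 "card I"] by simp
      show ?thesis using \<open>card (PiE I (\<lambda>_. (UNIV::bool set))) = 2 ^ card I\<close>
        by (simp only: sum_constant m2) simp
    qed
  qed
  also have "\<dots> = (\<Sum>k\<le>n. real (n choose k) * ((-2) ^ k * (r ^ (2 ^ n - 2 ^ (n - k)) - r ^ (2 ^ n))))"
    using sum_pow_card[of "{..<n}" "\<lambda>k. (-2) ^ k * (r ^ (2 ^ n - 2 ^ (n - k)) - r ^ (2 ^ n))"] by simp
  finally show ?thesis by (simp only: mult.assoc)
qed



lemma one_minus_G:
  fixes r :: real
  shows "1 - (\<Sum>k\<le>n. real (n choose k) * (-2) ^ k * (r ^ (2 ^ n - 2 ^ (n - k)) - r ^ (2 ^ n)))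
    = (-1) ^ n * r ^ (2 ^ n) + (\<Sum>k=1..n. (-1) ^ (k + 1) * real (n choose k) * 2 ^ k * r ^ (2 ^ n - 2 ^ (n - k)))"
proof -
  have bin: "(\<Sum>k\<le>n. real (n choose k) * (-2) ^ k) = (-1) ^ n"
    using binomial_ring[of "-2::real" 1 n] by (simp add: mult_ac)
  have split: "(\<Sum>k\<le>n. real (n choose k) * (-2) ^ k * r ^ (2 ^ n - 2 ^ (n - k)))
      = 1 + (\<Sum>k=1..n. real (n choose k) * (-2) ^ k * r ^ (2 ^ n - 2 ^ (n - k)))"
  proof -
    have "(\<Sum>k\<le>n. real (n choose k) * (-2) ^ k * r ^ (2 ^ n - 2 ^ (n - k)))
        = (\<Sum>k=0..n. real (n choose k) * (-2) ^ k * r ^ (2 ^ n - 2 ^ (n - k)))"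
      by (simp add: atMost_atLeast0)
    also have "\<dots> = 1 + (\<Sum>k=Suc 0..n. real (n choose k) * (-2) ^ k * r ^ (2 ^ n - 2 ^ (n - k)))"
      by (subst sum.atLeast_Suc_atMost) simp_all
    finally show ?thesis by simp
  qed
  have neg: "(\<Sum>k=1..n. real (n choose k) * (-2) ^ k * r ^ (2 ^ n - 2 ^ (n - k)))
      = - (\<Sum>k=1..n. (-1) ^ (k + 1) * real (n choose k) * 2 ^ k * r ^ (2 ^ n - 2 ^ (n - k)))"
  proof -
    have m2: "(-2::real) ^ k = - ((-1) ^ (k + 1) * 2 ^ k)" for k
      using power_mult_distrib[of "-1::real" 2 k] by simp
    show ?thesis by (simp add: m2 sum_negf[symmetric] mult_ac)
  qed
  have "(\<Sum>k\<le>n. real (n choose k) * (-2) ^ k * (r ^ (2 ^ n - 2 ^ (n - k)) - r ^ (2 ^ n)))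
      = (\<Sum>k\<le>n. real (n choose k) * (-2) ^ k * r ^ (2 ^ n - 2 ^ (n - k)))
        - r ^ (2 ^ n) * (\<Sum>k\<le>n. real (n choose k) * (-2) ^ k)"
    by (simp add: right_diff_distrib sum_subtractf sum_distrib_left mult_ac)
  thus ?thesis using bin split neg by simp
qed



lemma Pr_as_pow:
  assumes "B \<subseteq> boolfuns n"
  shows "Pr_p n p B = (\<Sum>S\<in>Pow (cube n). p ^ card S * (1 - p) ^ card (cube n - S) * of_bool ((\<lambda>x. x \<in> S) \<in> B))"
proof -
  let ?ind = "\<lambda>S x. x \<in> S"
  let ?Q = "{S\<in>Pow (cube n). ?ind S \<in> B}"
  have inj: "inj_on ?ind ?Q" by (rule inj_onI) (metis Collect_mem_eq)
  have img: "B = ?ind ` ?Q"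
  proof
    show "B \<subseteq> ?ind ` ?Q"
    proof
      fix f assume f: "f \<in> B"
      hence fb: "f \<in> boolfuns n" using assms by auto
      have "f = ?ind {x\<in>cube n. f x}" using fb by (auto simp: boolfuns_def)
      moreover have "{x\<in>cube n. f x} \<in> ?Q"
      proof -
        have "?ind {x\<in>cube n. f x} \<in> B" using f \<open>f = ?ind {x\<in>cube n. f x}\<close> by metis
        thus ?thesis by auto
      qed
      ultimately show "f \<in> ?ind ` ?Q" by blast
    qed
  qed auto
  have "Pr_p n p B = (\<Sum>S\<in>?Q. prob_p n p (?ind S))"
    unfolding Pr_p_def by (rule sum.reindex_cong[OF inj img refl])
  also have "\<dots> = (\<Sum>S\<in>?Q. p ^ card S * (1 - p) ^ card (cube n - S))"
  proof (rule sum.cong[OF refl])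
    fix S assume "S \<in> ?Q"
    hence "S \<subseteq> cube n" by auto
    hence "{x\<in>cube n. x \<in> S} = S" "{x\<in>cube n. x \<notin> S} = cube n - S" by auto
    thus "prob_p n p (?ind S) = p ^ card S * (1 - p) ^ card (cube n - S)"
      unfolding prob_p_def by simp
  qed
  also have "\<dots> = (\<Sum>S\<in>Pow (cube n). p ^ card S * (1 - p) ^ card (cube n - S) * of_bool (?ind S \<in> B))"
  proof -
    have e2: "Pow (cube n) \<inter> {S. ?ind S \<in> B} = ?Q" by auto
    have e1: "(\<Sum>S\<in>Pow (cube n). p ^ card S * (1 - p) ^ card (cube n - S) * of_bool (?ind S \<in> B))
       = (\<Sum>S\<in>Pow (cube n) \<inter> {S. ?ind S \<in> B}. p ^ card S * (1 - p) ^ card (cube n - S))"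
      by (rule sum_mult_of_bool_eq) (simp add: cube_finite)
    show ?thesis unfolding e1 e2 ..
  qed
  finally show ?thesis .
qed

lemma canal_char:
  assumes "S \<subseteq> cube n"
  shows "((\<lambda>x. x \<in> S) \<in> canal_set n) \<longleftrightarrow>
    ((\<exists>a\<in>{..<n} \<times> UNIV. hs n a \<subseteq> S) \<or> (\<exists>a\<in>{..<n} \<times> UNIV. hs n a \<subseteq> cube n - S))"
proof -
  have bf: "(\<lambda>x. x \<in> S) \<in> boolfuns n" using assms by (auto simp: boolfuns_def)
  have "canalizing n (\<lambda>x. x \<in> S) \<longleftrightarrow> (\<exists>i<n. \<exists>s. \<exists>v. \<forall>x\<in>cube n. x ! i = s \<longrightarrow> (x \<in> S) = v)"
    by (simp add: canalizing_def)
  also have "\<dots> \<longleftrightarrow> (\<exists>i<n. \<exists>s. hs n (i, s) \<subseteq> S \<or> hs n (i, s) \<subseteq> cube n - S)"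
  proof -
    have "(\<exists>v. \<forall>x\<in>cube n. x ! i = s \<longrightarrow> (x \<in> S) = v) \<longleftrightarrow> (hs n (i, s) \<subseteq> S \<or> hs n (i, s) \<subseteq> cube n - S)" for i s
    proof
      assume "\<exists>v. \<forall>x\<in>cube n. x ! i = s \<longrightarrow> (x \<in> S) = v"
      then obtain v where "\<forall>x\<in>cube n. x ! i = s \<longrightarrow> (x \<in> S) = v" by blast
      thus "hs n (i, s) \<subseteq> S \<or> hs n (i, s) \<subseteq> cube n - S"
        by (cases v) (auto simp: hs_def)
    next
      assume "hs n (i, s) \<subseteq> S \<or> hs n (i, s) \<subseteq> cube n - S"
      thus "\<exists>v. \<forall>x\<in>cube n. x ! i = s \<longrightarrow> (x \<in> S) = v"
      proof
        assume "hs n (i, s) \<subseteq> S"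
        hence "\<forall>x\<in>cube n. x ! i = s \<longrightarrow> (x \<in> S) = True" by (auto simp: hs_def)
        thus ?thesis by blast
      next
        assume "hs n (i, s) \<subseteq> cube n - S"
        hence "\<forall>x\<in>cube n. x ! i = s \<longrightarrow> (x \<in> S) = False" by (auto simp: hs_def)
        thus ?thesis by blast
      qed
    qed
    thus ?thesis by simp
  qed
  also have "\<dots> \<longleftrightarrow> ((\<exists>a\<in>{..<n} \<times> UNIV. hs n a \<subseteq> S) \<or> (\<exists>a\<in>{..<n} \<times> UNIV. hs n a \<subseteq> cube n - S))"
    by auto
  finally show ?thesis using bf by (simp add: canal_set_def)
qed

lemma pt_mem:
  assumes "i < n" "j < n" "\<not> (i = j \<and> t \<noteq> s)"
  shows "(replicate n False)[i := s, j := t] \<in> hs n (i, s) \<inter> hs n (j, t)"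
  using assms by (auto simp: hs_def cube_def nth_list_update)

lemma both_char:
  assumes "S \<subseteq> cube n"
  shows "((\<exists>a\<in>{..<n} \<times> UNIV. hs n a \<subseteq> S) \<and> (\<exists>a\<in>{..<n} \<times> UNIV. hs n a \<subseteq> cube n - S))
     \<longleftrightarrow> S \<in> hs n ` ({..<n} \<times> UNIV)"
proof
  assume "(\<exists>a\<in>{..<n} \<times> UNIV. hs n a \<subseteq> S) \<and> (\<exists>a\<in>{..<n} \<times> UNIV. hs n a \<subseteq> cube n - S)"
  then obtain i s j t where ij: "i < n" "j < n" "hs n (i, s) \<subseteq> S" "hs n (j, t) \<subseteq> cube n - S" by auto
  have "j = i \<and> t = (\<not> s)"
  proof (rule ccontr)
    assume "\<not> (j = i \<and> t = (\<not> s))"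
    hence "\<not> (i = j \<and> t \<noteq> s)" by auto
    from pt_mem[OF ij(1,2) this] ij(3,4) show False by blast
  qed
  hence "hs n (i, \<not> s) \<subseteq> cube n - S" using ij by simp
  hence "S = hs n (i, s)" using ij(3) assms by (auto simp: hs_def)
  thus "S \<in> hs n ` ({..<n} \<times> UNIV)" using ij by auto
next
  assume "S \<in> hs n ` ({..<n} \<times> UNIV)"
  then obtain i s where "i < n" "S = hs n (i, s)" by auto
  moreover have "hs n (i, \<not> s) \<subseteq> cube n - hs n (i, s)" by (auto simp: hs_def)
  ultimately show "(\<exists>a\<in>{..<n} \<times> UNIV. hs n a \<subseteq> S) \<and> (\<exists>a\<in>{..<n} \<times> UNIV. hs n a \<subseteq> cube n - S)"
    by auto
qed

lemma hs_inj: "inj_on (hs n) ({..<n} \<times> UNIV)"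
proof (rule inj_onI)
  fix a b assume a: "a \<in> {..<n} \<times> (UNIV::bool set)" and b: "b \<in> {..<n} \<times> (UNIV::bool set)"
    and e: "hs n a = hs n b"
  obtain i s where ab: "a = (i, s)" by (cases a)
  obtain j t where bb: "b = (j, t)" by (cases b)
  have i: "i < n" and j: "j < n" using a b ab bb by auto
  show "a = b"
  proof (cases "i = j")
    case True
    have "(replicate n False)[i := s, i := s] \<in> hs n (i, s)" using pt_mem[OF i i, where s=s and t=s] by blast
    hence "(replicate n False)[i := s, i := s] \<in> hs n (j, t)" using e ab bb by simp
    hence "s = t" using True i by (simp add: hs_def)
    thus ?thesis using ab bb True by simp
  next
    case False
    have "(replicate n False)[i := s, j := \<not> t] \<in> hs n (i, s)" using pt_mem[OF i j, where s=s and t="\<not> t"] False by blast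
    hence "(replicate n False)[i := s, j := \<not> t] \<in> hs n (j, t)" using e ab bb by simp
    hence False using j by (simp add: hs_def cube_def)
    thus ?thesis ..
  qed
qed

lemma hs_card:
  assumes "i < n"
  shows "card (hs n (i, s)) = 2 ^ (n - 1)" "card (cube n - hs n (i, s)) = 2 ^ (n - 1)"
proof -
  have "hs n (i, s) = {x\<in>cube n. \<forall>k\<in>{i}. x ! k = s}" by (auto simp: hs_def)
  hence c: "card (hs n (i, s)) = 2 ^ (n - 1)" using subcube_card[of "{i}" n "\<lambda>_. s"] assms by simp
  thus "card (hs n (i, s)) = 2 ^ (n - 1)" .
  have "card (cube n - hs n (i, s)) = 2 ^ n - 2 ^ (n - 1)"
    using c by (subst card_Diff_subset) (auto simp: cube_finite cube_card hs_def intro: finite_subset)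
  also have "\<dots> = 2 ^ (n - 1)"
    using assms by (cases n) auto
  finally show "card (cube n - hs n (i, s)) = 2 ^ (n - 1)" .
qed



lemma side:
  fixes r :: real
  assumes "n \<ge> 1"
  shows "(\<Sum>S\<in>Pow (cube n). r ^ card S * (1 - r) ^ card (cube n - S) * of_bool (\<exists>a\<in>{..<n} \<times> UNIV. hs n a \<subseteq> S))
    = (-1) ^ n * r ^ (2 ^ n) + (\<Sum>k=1..n. (-1) ^ (k + 1) * real (n choose k) * 2 ^ k * r ^ (2 ^ n - 2 ^ (n - k)))"
proof -
  have "(\<Sum>S\<in>Pow (cube n). r ^ card S * (1 - r) ^ card (cube n - S) * of_bool (\<exists>a\<in>{..<n} \<times> UNIV. hs n a \<subseteq> S))
     = 1 - (\<Sum>T\<in>Pow ({..<n} \<times> UNIV). (-1) ^ card T * r ^ card (\<Union>(hs n ` T)))"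
    by (rule incl_excl) (auto simp: cube_finite hs_def)
  also have "\<dots> = 1 - (\<Sum>k\<le>n. real (n choose k) * (-2) ^ k * (r ^ (2 ^ n - 2 ^ (n - k)) - r ^ (2 ^ n)))"
    by (simp only: comb_sum[OF assms])
  also have "\<dots> = (-1) ^ n * r ^ (2 ^ n) + (\<Sum>k=1..n. (-1) ^ (k + 1) * real (n choose k) * 2 ^ k * r ^ (2 ^ n - 2 ^ (n - k)))"
    by (rule one_minus_G)
  finally show ?thesis .
qed

theorem mainTheorem1:
  fixes n :: nat and p :: real
  assumes "n \<ge> 1" and "0 \<le> p" and "p \<le> 1"
  shows "Pr_p n p (canal_set n) =
    (-1) ^ n * (p ^ (2 ^ n) + (1 - p) ^ (2 ^ n))
    - 2 * real n * p ^ (2 ^ (n - 1)) * (1 - p) ^ (2 ^ (n - 1))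
    + (\<Sum>k=1..n. (-1) ^ (k + 1) * real (n choose k) * 2 ^ k *
         (p ^ (2 ^ n - 2 ^ (n - k)) + (1 - p) ^ (2 ^ n - 2 ^ (n - k))))"
proof -
  let ?Cu = "cube n"
  let ?A = "{..<n} \<times> (UNIV::bool set)"
  let ?w = "\<lambda>S. p ^ card S * (1 - p) ^ card (?Cu - S)"
  let ?P1 = "\<lambda>S. \<exists>a\<in>?A. hs n a \<subseteq> S"
  let ?P2 = "\<lambda>S. \<exists>a\<in>?A. hs n a \<subseteq> ?Cu - S"
  have fP: "finite (Pow ?Cu)" by (simp add: cube_finite)
  have "Pr_p n p (canal_set n) = (\<Sum>S\<in>Pow ?Cu. ?w S * of_bool ((\<lambda>x. x \<in> S) \<in> canal_set n))"
    by (rule Pr_as_pow) (auto simp: canal_set_def)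
  also have "\<dots> = (\<Sum>S\<in>Pow ?Cu. ?w S * of_bool (?P1 S) + ?w S * of_bool (?P2 S) - ?w S * of_bool (?P1 S \<and> ?P2 S))"
  proof (rule sum.cong[OF refl])
    fix S assume "S \<in> Pow ?Cu"
    hence "((\<lambda>x. x \<in> S) \<in> canal_set n) = (?P1 S \<or> ?P2 S)" using canal_char by blast
    thus "?w S * of_bool ((\<lambda>x. x \<in> S) \<in> canal_set n) = ?w S * of_bool (?P1 S) + ?w S * of_bool (?P2 S) - ?w S * of_bool (?P1 S \<and> ?P2 S)"
      by (cases "?P1 S"; cases "?P2 S") simp_all
  qed
  also have "\<dots> = (\<Sum>S\<in>Pow ?Cu. ?w S * of_bool (?P1 S)) + (\<Sum>S\<in>Pow ?Cu. ?w S * of_bool (?P2 S))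
       - (\<Sum>S\<in>Pow ?Cu. ?w S * of_bool (?P1 S \<and> ?P2 S))"
    by (simp only: sum.distrib sum_subtractf)
  finally have main: "Pr_p n p (canal_set n) = (\<Sum>S\<in>Pow ?Cu. ?w S * of_bool (?P1 S)) + (\<Sum>S\<in>Pow ?Cu. ?w S * of_bool (?P2 S))
       - (\<Sum>S\<in>Pow ?Cu. ?w S * of_bool (?P1 S \<and> ?P2 S))" .
  have t1: "(\<Sum>S\<in>Pow ?Cu. ?w S * of_bool (?P1 S)) = (-1) ^ n * p ^ (2 ^ n) + (\<Sum>k=1..n. (-1) ^ (k + 1) * real (n choose k) * 2 ^ k * p ^ (2 ^ n - 2 ^ (n - k)))"
    by (rule side[OF assms(1)])
  have t2: "(\<Sum>S\<in>Pow ?Cu. ?w S * of_bool (?P2 S)) = (-1) ^ n * (1 - p) ^ (2 ^ n) + (\<Sum>k=1..n. (-1) ^ (k + 1) * real (n choose k) * 2 ^ k * (1 - p) ^ (2 ^ n - 2 ^ (n - k)))"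
  proof -
    have "(\<Sum>S\<in>Pow ?Cu. ?w S * of_bool (?P2 S)) = (\<Sum>S\<in>Pow ?Cu. (1 - p) ^ card S * (1 - (1 - p)) ^ card (?Cu - S) * of_bool (?P1 S))"
    proof (rule sum.reindex_bij_witness[where i="\<lambda>S. ?Cu - S" and j="\<lambda>S. ?Cu - S"])
      fix S assume "S \<in> Pow ?Cu" thus "?Cu - (?Cu - S) = S" by auto
    next
      fix S assume "S \<in> Pow ?Cu" thus "?Cu - S \<in> Pow ?Cu" by auto
    next
      fix S assume "S \<in> Pow ?Cu" thus "?Cu - (?Cu - S) = S" by auto
    next
      fix S assume "S \<in> Pow ?Cu" thus "?Cu - S \<in> Pow ?Cu" by auto
    next
      fix S assume S: "S \<in> Pow ?Cu"
      have "?Cu - (?Cu - S) = S" using S by auto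
      thus "(1 - p) ^ card (?Cu - S) * (1 - (1 - p)) ^ card (?Cu - (?Cu - S)) * of_bool (?P1 (?Cu - S))
          = ?w S * of_bool (?P2 S)"
        by (simp add: mult_ac)
    qed
    also have "\<dots> = (-1) ^ n * (1 - p) ^ (2 ^ n) + (\<Sum>k=1..n. (-1) ^ (k + 1) * real (n choose k) * 2 ^ k * (1 - p) ^ (2 ^ n - 2 ^ (n - k)))"
      by (rule side[OF assms(1)])
    finally show ?thesis .
  qed
  have t3: "(\<Sum>S\<in>Pow ?Cu. ?w S * of_bool (?P1 S \<and> ?P2 S)) = 2 * real n * p ^ (2 ^ (n - 1)) * (1 - p) ^ (2 ^ (n - 1))"
  proof -
    have "(\<Sum>S\<in>Pow ?Cu. ?w S * of_bool (?P1 S \<and> ?P2 S)) = (\<Sum>S\<in>Pow ?Cu. ?w S * of_bool (S \<in> hs n ` ?A))"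
    proof (rule sum.cong[OF refl])
      fix S assume "S \<in> Pow ?Cu"
      hence "(?P1 S \<and> ?P2 S) = (S \<in> hs n ` ?A)" using both_char[of S n] by blast
      thus "?w S * of_bool (?P1 S \<and> ?P2 S) = ?w S * of_bool (S \<in> hs n ` ?A)" by (simp only:)
    qed
    also have "\<dots> = (\<Sum>S\<in>Pow ?Cu \<inter> {S. S \<in> hs n ` ?A}. ?w S)"
      by (rule sum_mult_of_bool_eq[OF fP])
    also have "Pow ?Cu \<inter> {S. S \<in> hs n ` ?A} = hs n ` ?A" by (auto simp: hs_def)
    also have "(\<Sum>S\<in>hs n ` ?A. ?w S) = (\<Sum>a\<in>?A. ?w (hs n a))"
      by (rule sum.reindex[OF hs_inj, unfolded comp_def])
    also have "\<dots> = (\<Sum>a\<in>?A. p ^ (2 ^ (n - 1)) * (1 - p) ^ (2 ^ (n - 1)))"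
      by (intro sum.cong refl) (auto simp: hs_card)
    also have "\<dots> = 2 * real n * p ^ (2 ^ (n - 1)) * (1 - p) ^ (2 ^ (n - 1))"
      by (simp add: card_cartesian_product)
    finally show ?thesis .
  qed
  have sd: "(\<Sum>k=1..n. (-1) ^ (k + 1) * real (n choose k) * 2 ^ k *
         (p ^ (2 ^ n - 2 ^ (n - k)) + (1 - p) ^ (2 ^ n - 2 ^ (n - k))))
    = (\<Sum>k=1..n. (-1) ^ (k + 1) * real (n choose k) * 2 ^ k * p ^ (2 ^ n - 2 ^ (n - k)))
      + (\<Sum>k=1..n. (-1) ^ (k + 1) * real (n choose k) * 2 ^ k * (1 - p) ^ (2 ^ n - 2 ^ (n - k)))"
    by (simp only: distrib_left sum.distrib)
  show ?thesis unfolding main t1 t2 t3 sd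
    by (simp only: distrib_left)
qed


end
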